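(* Let $G$ be a finite simple graph that contains a cycle of odd length. Then $S(G)$ contains a subdivision of $K_{3,3}$ as a subgraph.
   Context: For a graph $G$, the great shadow $S(G)$ is the graph obtained from $G$ by adding, for each vertex $v$ of $G$, a new vertex $v'$ (the shadow vertex of $v$) and making $v'$ adjacent to $v$ and to every neighbor of $v$ in $G$; no other edges are added. A subdivision of a graph $F$ is a graph obtained from $F$ by replacing edges with internally vertex-disjoint paths. *)

theory Defs
  imports Main
begin

definition simple_graph :: "'a set \<Rightarrow> ('a \<Rightarrow> 'a \<Rightarrow> bool) \<Rightarrow> bool" where
  "simple_graph V E \<longleftrightarrow> finite V \<and> (\<forall>x y. E x y \<longrightarrow> x \<in> V \<and> y \<in> V)
     \<and> (\<forall>x y. E x y \<longrightarrow> E y x) \<and> (\<forall>x. \<not> E x x)"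

definition is_cycle :: "'a set \<Rightarrow> ('a \<Rightarrow> 'a \<Rightarrow> bool) \<Rightarrow> 'a list \<Rightarrow> bool" where
  "is_cycle V E c \<longleftrightarrow> length c \<ge> 3 \<and> distinct c \<and> set c \<subseteq> V
     \<and> (\<forall>i < length c. E (c ! i) (c ! ((i + 1) mod length c)))"

definition has_odd_cycle :: "'a set \<Rightarrow> ('a \<Rightarrow> 'a \<Rightarrow> bool) \<Rightarrow> bool" where
  "has_odd_cycle V E \<longleftrightarrow> (\<exists>c. is_cycle V E c \<and> odd (length c))"

text \<open>Great shadow: original vertex v is Inl v, its shadow vertex v' is Inr v.\<close>
definition shadow_V :: "'a set \<Rightarrow> ('a + 'a) set" where
  "shadow_V V = Inl ` V \<union> Inr ` V"

fun shadow_E :: "'a set \<Rightarrow> ('a \<Rightarrow> 'a \<Rightarrow> bool) \<Rightarrow> 'a + 'a \<Rightarrow> 'a + 'a \<Rightarrow> bool" where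
  "shadow_E V E (Inl u) (Inl v) = E u v"
| "shadow_E V E (Inl u) (Inr v) = ((u = v \<and> v \<in> V) \<or> E v u)"
| "shadow_E V E (Inr u) (Inl v) = ((u = v \<and> u \<in> V) \<or> E u v)"
| "shadow_E V E (Inr u) (Inr v) = False"

definition is_path :: "'a set \<Rightarrow> ('a \<Rightarrow> 'a \<Rightarrow> bool) \<Rightarrow> 'a list \<Rightarrow> bool" where
  "is_path V E p \<longleftrightarrow> p \<noteq> [] \<and> distinct p \<and> set p \<subseteq> V
     \<and> (\<forall>i. i + 1 < length p \<longrightarrow> E (p ! i) (p ! (i + 1)))"

definition interior :: "'a list \<Rightarrow> 'a set" where
  "interior p = set (butlast (tl p))"

definition contains_subdivision ::
  "'a set \<Rightarrow> ('a \<Rightarrow> 'a \<Rightarrow> bool) \<Rightarrow> 'b set \<Rightarrow> ('b \<Rightarrow> 'b \<Rightarrow> bool) \<Rightarrow> bool" where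
  "contains_subdivision V E VF EF \<longleftrightarrow>
    (\<exists>(f :: 'b \<Rightarrow> 'a) (P :: 'b \<Rightarrow> 'b \<Rightarrow> 'a list).
       inj_on f VF \<and> f ` VF \<subseteq> V \<and>
       (\<forall>x y. EF x y \<longrightarrow>
          is_path V E (P x y) \<and> hd (P x y) = f x \<and> last (P x y) = f y \<and>
          P y x = rev (P x y) \<and> interior (P x y) \<inter> f ` VF = {}) \<and>
       (\<forall>x y x' y'. EF x y \<longrightarrow> EF x' y' \<longrightarrow> {x, y} \<noteq> {x', y'} \<longrightarrow>
          interior (P x y) \<inter> set (P x' y') = {}))"

definition K33_V :: "nat set" where
  "K33_V = {0..<6}"

definition K33_E :: "nat \<Rightarrow> nat \<Rightarrow> bool" where
  "K33_E x y \<longleftrightarrow> (x < 3 \<and> 3 \<le> y \<and> y < 6) \<or> (y < 3 \<and> 3 \<le> x \<and> x < 6)"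

end

theory Submission
  imports Defs
begin

lemma interior_rev: "interior (rev p) = interior p"
  unfolding interior_def by (metis butlast_rev butlast_tl rev_rev_ident set_rev)

lemma shadow_E_sym:
  assumes "\<And>x y. E x y \<Longrightarrow> E y x" "shadow_E V E u v"
  shows "shadow_E V E v u"
  using assms by (cases u; cases v) auto

lemma is_path_rev:
  assumes "\<And>x y. E x y \<Longrightarrow> E y x" "is_path V E p"
  shows "is_path V E (rev p)"
  unfolding is_path_def
proof (intro conjI allI impI)
  show "rev p \<noteq> []" "distinct (rev p)" "set (rev p) \<subseteq> V" using assms(2) unfolding is_path_def by auto
  fix i assume i: "i + 1 < length (rev p)"
  let ?m = "length p"
  have "E (p ! (?m - Suc (Suc i))) (p ! (?m - Suc (Suc i) + 1))"
    using assms(2) i unfolding is_path_def by auto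
  moreover have "?m - Suc (Suc i) + 1 = ?m - Suc i" using i by auto
  ultimately have "E (p ! (?m - Suc (Suc i))) (p ! (?m - Suc i))" by simp
  then have "E (p ! (?m - Suc i)) (p ! (?m - Suc (Suc i)))" using assms(1) by blast
  moreover have "rev p ! i = p ! (?m - Suc i)" using i by (simp add: rev_nth)
  moreover have "rev p ! (i+1) = p ! (?m - Suc (Suc i))" using i by (simp add: rev_nth)
  ultimately show "E (rev p ! i) (rev p ! (i + 1))" by simp
qed

locale oc =
  fixes V :: "'a set" and E c
  assumes sg: "simple_graph V E" and cyc: "is_cycle V E c" and od: "odd (length c)"
begin

definition a where "a i = c ! (i mod length c)"

lemma n3: "3 \<le> length c" using cyc is_cycle_def by auto

lemma aV: "a i \<in> V"
proof -
  have "length c > 0" using n3 by auto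
  then have "c ! (i mod length c) \<in> set c" by auto
  then show ?thesis using cyc unfolding is_cycle_def a_def by auto
qed

lemma Esym: "E x y \<Longrightarrow> E y x" using sg unfolding simple_graph_def by auto

lemma Esym_shadow: "shadow_E V E u v \<Longrightarrow> shadow_E V E v u" using shadow_E_sym Esym by blast

lemma aE: "E (a i) (a (Suc i))"
proof -
  have "length c > 0" using n3 by auto
  then have "E (c ! (i mod length c)) (c ! ((i mod length c + 1) mod length c))"
    using cyc unfolding is_cycle_def by auto
  then show ?thesis unfolding a_def by (simp add: mod_Suc_eq)
qed

lemma aE': "E (a (Suc i)) (a i)" using aE Esym by blast

lemma a_eq: "a i = a j \<longleftrightarrow> i mod length c = j mod length c"
proof -
  have "length c > 0" using n3 by auto
  moreover have "distinct c" using cyc unfolding is_cycle_def by auto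
  ultimately show ?thesis unfolding a_def by (simp add: nth_eq_iff_index_eq)
qed

definition alt :: "bool \<Rightarrow> nat \<Rightarrow> 'a + 'a" where
  "alt b i = (if even i = b then Inl (a i) else Inr (a i))"

definition L where "L b = map (alt b) [2..<length c + 1]"

definition f :: "nat \<Rightarrow> 'a + 'a" where
  "f x = (if x=0 then Inl (a 0) else if x=1 then Inl (a 2) else if x=2 then Inl (a 1)
     else if x=3 then Inr (a 1) else if x = 4 then Inr (a 0) else Inr (a 2))"

definition Q where "Q x y = (if x=1 \<and> y=4 then L True else if x=0 \<and> y=5 then rev (L False) else [f x, f y])"

definition P where "P x y = (if x<3 then Q x y else rev (Q y x))"

definition und :: "'a + 'a \<Rightarrow> 'a" where "und = case_sum id id"

lemma und_alt: "und (alt b i) = a i" unfolding und_def alt_def by auto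

lemma a012: "a 0 \<noteq> a 1" "a 0 \<noteq> a 2" "a 1 \<noteq> a 2"
  using n3 by (auto simp: a_eq)

lemma f_inj: "inj_on f K33_V"
  unfolding inj_on_def K33_V_def f_def using a012 by (auto simp: eq_commute)

lemma und_f: "x \<in> K33_V \<Longrightarrow> und (f x) \<in> {a 0, a 1, a 2}"
  unfolding und_def f_def by auto

lemma aV_big: "3 \<le> i \<Longrightarrow> i < length c \<Longrightarrow> a i \<notin> {a 0, a 1, a 2}"
  using n3 by (auto simp: a_eq)

lemma interior_L: "interior (L b) = alt b ` {3..<length c}"
proof -
  have "[2..<length c + 1] = [2..<length c] @ [length c]" using n3 by simp
  also have "[2..<length c] = 2 # [3..<length c]" using n3 by (simp add: upt_conv_Cons)
  finally have "[2..<length c + 1] = 2 # [3..<length c] @ [length c]" by simp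
  then show ?thesis unfolding interior_def L_def by (simp add: map_butlast[symmetric])
qed

lemma set_L: "set (L b) = alt b ` {2..<length c + 1}"
  unfolding L_def by auto

lemma hd_L: "hd (L b) = alt b 2" using n3 unfolding L_def by (simp add: upt_conv_Cons)
lemma last_L: "last (L b) = alt b (length c)" using n3 unfolding L_def by simp

lemma a_n: "a (length c) = a 0" unfolding a_def by simp

lemma is_path_L: "is_path (shadow_V V) (shadow_E V E) (L b)"
  unfolding is_path_def
proof (intro conjI allI impI)
  show "L b \<noteq> []" using n3 unfolding L_def by auto
  show "set (L b) \<subseteq> shadow_V V" unfolding L_def shadow_V_def alt_def using aV by auto
  have "inj_on (alt b) {2..<length c + 1}"
  proof (rule inj_onI)
    fix i j assume i: "i \<in> {2..<length c + 1}" and j: "j \<in> {2..<length c + 1}" and e: "alt b i = alt b j"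
    then have "a i = a j" using und_alt by metis
    then have m: "i mod length c = j mod length c" by (simp add: a_eq)
    have ki: "i mod length c = (if i = length c then 0 else i)" using i by auto
    have kj: "j mod length c = (if j = length c then 0 else j)" using j by auto
    show "i = j" using m ki kj i j by (auto split: if_splits)
  qed
  then show "distinct (L b)" unfolding L_def distinct_map set_upt by (simp only: distinct_upt simp_thms)
  fix i assume i: "i + 1 < length (L b)"
  have gen: "L b ! k = alt b (2 + k)" if "k < length (L b)" for k
    using that unfolding L_def by (simp del: upt_Suc)
  have e1: "L b ! i = alt b (2 + i)" "L b ! (i+1) = alt b (2 + i + 1)"
    using gen[of i] gen[of "i+1"] i by auto
  show "shadow_E V E (L b ! i) (L b ! (i + 1))"
    unfolding e1 alt_def using aE[of "2+i"] aE'[of "2+i"] by auto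
qed


lemma E01: "E (a 0) (a 1)" "E (a 1) (a 0)" using aE[of 0] aE'[of 0] by simp_all
lemma E12: "E (a 1) (a 2)" "E (a 2) (a 1)" using aE[of 1] aE'[of 1] by (simp_all add: numeral_2_eq_2)

lemma short_E:
  assumes "x < 3" "3 \<le> y" "y < 6" "\<not>(x=1 \<and> y=4)" "\<not>(x=0 \<and> y=5)"
  shows "shadow_E V E (f x) (f y)"
proof -
  have "x = 0 \<or> x = 1 \<or> x = 2" "y = 3 \<or> y = 4 \<or> y = 5" using assms by auto
  then show ?thesis using assms E01 E12 aV unfolding f_def by auto
qed

lemma f_V: "f x \<in> shadow_V V" unfolding f_def shadow_V_def using aV by auto

lemma alt_ne:
  assumes "3 \<le> i" "i < length c" "2 \<le> j" "j \<le> length c"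
  shows "alt b i \<noteq> alt (\<not>b) j"
proof
  assume e: "alt b i = alt (\<not>b) j"
  then have "a i = a j" using und_alt by metis
  then have m: "i mod length c = j mod length c" by (simp add: a_eq)
  have ki: "i mod length c = i" using assms by auto
  have kj: "j mod length c = (if j = length c then 0 else j)" using assms by auto
  have "i = j" using m ki kj assms by (auto split: if_splits)
  then show False using e unfolding alt_def by (auto split: if_splits)
qed

lemma int_L_F: "interior (L b) \<inter> f ` K33_V = {}"
proof -
  { fix i x assume i: "i \<in> {3..<length c}" and x: "x \<in> K33_V" and e: "alt b i = f x"
    have "und (f x) \<in> {a 0, a 1, a 2}" using und_f x .
    then have "a i \<in> {a 0, a 1, a 2}" using e und_alt by metis
    then have False using aV_big i by auto }
  then show ?thesis unfolding interior_L by blast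
qed

lemma Q_props:
  assumes "x < 3" "3 \<le> y" "y < 6"
  shows "is_path (shadow_V V) (shadow_E V E) (Q x y) \<and> hd (Q x y) = f x \<and> last (Q x y) = f y
    \<and> interior (Q x y) \<inter> f ` K33_V = {}"
proof -
  have oddn: "\<not> even (length c)" using od by simp
  consider "x = 1 \<and> y = 4" | "x = 0 \<and> y = 5" | "\<not>(x=1 \<and> y=4) \<and> \<not>(x=0 \<and> y=5)" by blast
  then show ?thesis
  proof cases
    case 1
    then show ?thesis using is_path_L[of True] hd_L last_L int_L_F a_n oddn
      unfolding Q_def by (simp add: alt_def f_def)
  next
    case 2
    then show ?thesis using is_path_rev[OF Esym_shadow is_path_L[of False]] hd_L last_L int_L_F a_n oddn
      unfolding Q_def by (simp add: alt_def f_def interior_rev hd_rev last_rev)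
  next
    case 3
    have ne: "f x \<noteq> f y" using inj_onD[OF f_inj, of x y] assms unfolding K33_V_def by auto
    have "is_path (shadow_V V) (shadow_E V E) [f x, f y]"
      unfolding is_path_def using ne f_V short_E[OF assms 3[THEN conjunct1] 3[THEN conjunct2]]
      by (auto simp: less_Suc_eq)
    moreover have "interior [f x, f y] = {}" unfolding interior_def by simp
    ultimately show ?thesis using 3 unfolding Q_def by auto
  qed
qed


lemma set_Q_short: "\<not>(x=1 \<and> y=4) \<Longrightarrow> \<not>(x=0 \<and> y=5) \<Longrightarrow> x < 6 \<Longrightarrow> y < 6 \<Longrightarrow> set (Q x y) \<subseteq> f ` K33_V"
  unfolding Q_def K33_V_def by auto

lemma int_Q_short: "\<not>(x=1 \<and> y=4) \<Longrightarrow> \<not>(x=0 \<and> y=5) \<Longrightarrow> interior (Q x y) = {}"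
  unfolding Q_def interior_def by auto

lemma LL_disj: "interior (L b) \<inter> set (L (\<not>b)) = {}"
  unfolding interior_L set_L using alt_ne by fastforce

lemma Q_disj:
  assumes "x < 3" "3 \<le> y" "y < 6" "x' < 3" "3 \<le> y'" "y' < 6" "(x,y) \<noteq> (x',y')"
  shows "interior (Q x y) \<inter> set (Q x' y') = {}"
proof -
  consider "x = 1 \<and> y = 4" | "x = 0 \<and> y = 5" | "\<not>(x=1 \<and> y=4) \<and> \<not>(x=0 \<and> y=5)" by blast
  then show ?thesis
  proof cases
    case 1
    then have i: "interior (Q x y) = interior (L True)" unfolding Q_def by simp
    show ?thesis
    proof (cases "x' = 0 \<and> y' = 5")
      case True
      then show ?thesis unfolding i using LL_disj[of True] unfolding Q_def by simp
    next
      case False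
      then show ?thesis unfolding i using set_Q_short[of x' y'] int_L_F[of True] 1 assms by auto
    qed
  next
    case 2
    then have i: "interior (Q x y) = interior (L False)" unfolding Q_def by (simp add: interior_rev)
    show ?thesis
    proof (cases "x' = 1 \<and> y' = 4")
      case True
      then show ?thesis unfolding i using LL_disj[of False] unfolding Q_def by simp
    next
      case False
      then show ?thesis unfolding i using set_Q_short[of x' y'] int_L_F[of False] 2 assms by auto
    qed
  next
    case 3
    then show ?thesis using int_Q_short by auto
  qed
qed

lemma P_norm:
  assumes "K33_E x y"
  shows "\<exists>u v. u < 3 \<and> 3 \<le> v \<and> v < 6 \<and> {x,y} = {u,v} \<and> set (P x y) = set (Q u v)
     \<and> interior (P x y) = interior (Q u v)"
proof (cases "x < 3")
  case True
  then show ?thesis using assms unfolding K33_E_def P_def by auto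
next
  case False
  then have "y < 3" "3 \<le> x" "x < 6" using assms unfolding K33_E_def by auto
  then show ?thesis using False unfolding P_def
    by (intro exI[of _ y] exI[of _ x]) (auto simp: interior_rev insert_commute)
qed

lemma A: "K33_E x y \<Longrightarrow> is_path (shadow_V V) (shadow_E V E) (P x y) \<and> hd (P x y) = f x \<and> last (P x y) = f y \<and>
          P y x = rev (P x y) \<and> interior (P x y) \<inter> f ` K33_V = {}"
proof (cases "x < 3")
  assume e: "K33_E x y"
  case True
  then have "3 \<le> y" "y < 6" using e unfolding K33_E_def by auto
  then show ?thesis using Q_props[OF True] True unfolding P_def by auto
next
  assume e: "K33_E x y"
  case False
  then have y: "y < 3" "3 \<le> x" "x < 6" using e unfolding K33_E_def by auto
  then show ?thesis using Q_props[OF y] False is_path_rev[OF Esym_shadow]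
    unfolding P_def by (auto simp: hd_rev last_rev interior_rev)
qed

lemma B: 
  assumes e: "K33_E x y" "K33_E x' y'" and ne: "{x, y} \<noteq> {x', y'}"
  shows "interior (P x y) \<inter> set (P x' y') = {}"
proof -
  obtain u v where uv: "u < 3" "3 \<le> v" "v < 6" "{x,y} = {u,v}" "set (P x y) = set (Q u v)"
     "interior (P x y) = interior (Q u v)" using P_norm[OF e(1)] by blast
  obtain u' v' where uv': "u' < 3" "3 \<le> v'" "v' < 6" "{x',y'} = {u',v'}" "set (P x' y') = set (Q u' v')"
     "interior (P x' y') = interior (Q u' v')" using P_norm[OF e(2)] by blast
  have "(u,v) \<noteq> (u',v')" using ne uv(4) uv'(4) by auto
  then show ?thesis unfolding uv(6) uv'(5)
    using Q_disj uv uv' by blast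
qed

lemma main: "contains_subdivision (shadow_V V) (shadow_E V E) K33_V K33_E"
  unfolding contains_subdivision_def
  apply (rule exI[of _ f], rule exI[of _ P])
  using f_inj f_V A B by blast

end

theorem lemma5p1:
  fixes V :: "'a set" and E :: "'a \<Rightarrow> 'a \<Rightarrow> bool"
  assumes "simple_graph V E"
    and "has_odd_cycle V E"
  shows "contains_subdivision (shadow_V V) (shadow_E V E) K33_V K33_E"
proof -
  obtain c where "is_cycle V E c" "odd (length c)" using assms(2) unfolding has_odd_cycle_def by blast
  then interpret oc V E c using assms(1) by unfold_locales
  show ?thesis by (rule main)
qed

end
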